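(* Let $k\ge 2$. A maximally-connected coupling $r=(r_{ij})$ of the 1-2 system of $(R^1,R^2)$, if it exists, is unique. Moreover, in this coupling the only entries $r_{ij}$ that can be nonzero are the diagonal entries $r_{11},\dots,r_{kk}$ together with either the entries $r_{i1},r_{i2},\dots,r_{ik}$ of a single fixed row $i$, or the entries $r_{1j},r_{2j},\dots,r_{kj}$ of a single fixed column $j$.
   Context: Let $R^1,R^2$ be two stochastically unrelated random variables with values in $\{1,\dots,k\}$, $\Pr[R^1=i]=p_i$, $\Pr[R^2=i]=q_i$, where $p_i,q_i\ge0$ and $\sum_i p_i=\sum_i q_i=1$. The 1-2 system is the system consisting of the splits $\mathbf 1[R^c\in W]$ ($c=1,2$) for all $W\subseteq\{1,\dots,k\}$ with $|W|\in\{1,2\}$. A maximally-connected coupling of the 1-2 system is a $k\times k$ matrix $r=(r_{ij})$ of nonnegative reals such that: $\sum_j r_{ij}=p_i$ and $\sum_i r_{ij}=q_j$ for all $i,j$; $r_{ii}=\min(p_i,q_i)$ for all $i$; and $r_{ii}+r_{ij}+r_{ji}+r_{jj}=\min(p_i+p_j,q_i+q_j)$ for all $i<j$. (Here $r_{ij}$ is the probability that $R^1$'s bunch is in the state of value $i$ and $R^2$'s in the state of value $j$; the conditions say each 1-split and 2-split pair is maximally coupled.) *)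

theory Defs
  imports Main "HOL.Real"
begin

definition is_dist :: "nat \<Rightarrow> (nat \<Rightarrow> real) \<Rightarrow> bool" where
  "is_dist k p \<longleftrightarrow> (\<forall>i\<in>{1..k}. p i \<ge> 0) \<and> (\<Sum>i=1..k. p i) = 1"

definition max_conn_coupling_12 ::
  "nat \<Rightarrow> (nat \<Rightarrow> real) \<Rightarrow> (nat \<Rightarrow> real) \<Rightarrow> (nat \<Rightarrow> nat \<Rightarrow> real) \<Rightarrow> bool" where
  "max_conn_coupling_12 k p q r \<longleftrightarrow>
     (\<forall>i\<in>{1..k}. \<forall>j\<in>{1..k}. r i j \<ge> 0) \<and>
     (\<forall>i\<in>{1..k}. (\<Sum>j=1..k. r i j) = p i) \<and>
     (\<forall>j\<in>{1..k}. (\<Sum>i=1..k. r i j) = q j) \<and>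
     (\<forall>i\<in>{1..k}. r i i = min (p i) (q i)) \<and>
     (\<forall>i\<in>{1..k}. \<forall>j\<in>{1..k}. i < j \<longrightarrow>
        r i i + r i j + r j i + r j j = min (p i + p j) (q i + q j))"

end

theory Submission
  imports Defs
begin

lemma rowle:
  assumes m: "max_conn_coupling_12 k p q r" and i: "i \<in> {1..k}" and S: "S \<subseteq> {1..k} - {i}"
  shows "sum (r i) S \<le> p i - min (p i) (q i)"
proof -
  have nn: "\<forall>j\<in>{1..k}. r i j \<ge> 0" and rs: "(\<Sum>j=1..k. r i j) = p i" and d: "r i i = min (p i) (q i)"
    using m i unfolding max_conn_coupling_12_def by auto
  have "(\<Sum>j=1..k. r i j) = r i i + sum (r i) ({1..k} - {i})"
    using i by (simp add: sum.remove)
  moreover have "sum (r i) S \<le> sum (r i) ({1..k} - {i})"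
    by (rule sum_mono2) (use S nn in auto)
  ultimately show ?thesis using rs d by linarith
qed

lemma colle:
  assumes m: "max_conn_coupling_12 k p q r" and j: "j \<in> {1..k}" and S: "S \<subseteq> {1..k} - {j}"
  shows "sum (\<lambda>i. r i j) S \<le> q j - min (p j) (q j)"
proof -
  have nn: "\<forall>i\<in>{1..k}. r i j \<ge> 0" and rs: "(\<Sum>i=1..k. r i j) = q j" and d: "r j j = min (p j) (q j)"
    using m j unfolding max_conn_coupling_12_def by auto
  have "(\<Sum>i=1..k. r i j) = r j j + sum (\<lambda>i. r i j) ({1..k} - {j})"
    using j by (simp add: sum.remove)
  moreover have "sum (\<lambda>i. r i j) S \<le> sum (\<lambda>i. r i j) ({1..k} - {j})"
    by (rule sum_mono2) (use S nn in auto)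
  ultimately show ?thesis using rs d by linarith
qed

lemma formula:
  assumes m: "max_conn_coupling_12 k p q r" and i: "i \<in> {1..k}" and j: "j \<in> {1..k}" and ij: "i \<noteq> j"
  shows "r i j = min (max (p i - q i) 0) (max (q j - p j) 0)"
proof -
  have nn: "\<And>a b. a \<in> {1..k} \<Longrightarrow> b \<in> {1..k} \<Longrightarrow> r a b \<ge> 0"
    and dg: "\<And>a. a \<in> {1..k} \<Longrightarrow> r a a = min (p a) (q a)"
    and pr: "\<And>a b. a \<in> {1..k} \<Longrightarrow> b \<in> {1..k} \<Longrightarrow> a < b \<Longrightarrow>
        r a a + r a b + r b a + r b b = min (p a + p b) (q a + q b)"
    using m unfolding max_conn_coupling_12_def by auto
  have r1: "r i j \<le> p i - min (p i) (q i)"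
    using rowle[OF m i, of "{j}"] ij j by auto
  have c1: "r i j \<le> q j - min (p j) (q j)"
    using colle[OF m j, of "{i}"] ij i by auto
  have r2: "r j i \<le> p j - min (p j) (q j)"
    using rowle[OF m j, of "{i}"] ij i by auto
  have pair: "r i i + r i j + r j i + r j j = min (p i + p j) (q i + q j)"
  proof (cases "i < j")
    case True then show ?thesis using pr[OF i j] by simp
  next
    case False then have "j < i" using ij by simp
    then show ?thesis using pr[OF j i] by (simp add: add.commute add.left_commute)
  qed
  show ?thesis
    using r1 c1 r2 pair nn[OF i j] nn[OF j i] dg[OF i] dg[OF j]
    by (auto simp: min_def max_def split: if_splits)
qed

theorem theorem5:
  fixes k :: nat and p q :: "nat \<Rightarrow> real"
  assumes "k \<ge> 2" and "is_dist k p" and "is_dist k q"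
  shows "(\<forall>r r'. max_conn_coupling_12 k p q r \<and> max_conn_coupling_12 k p q r' \<longrightarrow>
            (\<forall>i\<in>{1..k}. \<forall>j\<in>{1..k}. r i j = r' i j))
       \<and> (\<forall>r. max_conn_coupling_12 k p q r \<longrightarrow>
            (\<exists>i0\<in>{1..k}. \<forall>i\<in>{1..k}. \<forall>j\<in>{1..k}. r i j \<noteq> 0 \<longrightarrow> i = j \<or> i = i0)
          \<or> (\<exists>j0\<in>{1..k}. \<forall>i\<in>{1..k}. \<forall>j\<in>{1..k}. r i j \<noteq> 0 \<longrightarrow> i = j \<or> j = j0))"
proof (intro conjI allI impI ballI)
  fix r r' i j assume h: "max_conn_coupling_12 k p q r \<and> max_conn_coupling_12 k p q r'"
    and i: "i \<in> {1..k}" and j: "j \<in> {1..k}"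
  show "r i j = r' i j"
  proof (cases "i = j")
    case True then show ?thesis using h i unfolding max_conn_coupling_12_def by auto
  next
    case False then show ?thesis using formula[OF _ i j False, of p q r] formula[OF _ i j False, of p q r'] h by simp
  qed
next
  fix r assume m: "max_conn_coupling_12 k p q r"
  define d where "d = (\<lambda>a. p a - q a)"
  have F: "\<And>a b. a \<in> {1..k} \<Longrightarrow> b \<in> {1..k} \<Longrightarrow> a \<noteq> b \<Longrightarrow>
      r a b = min (max (d a) 0) (max (- d b) 0)"
    using formula[OF m] unfolding d_def by simp
  show "(\<exists>i0\<in>{1..k}. \<forall>i\<in>{1..k}. \<forall>j\<in>{1..k}. r i j \<noteq> 0 \<longrightarrow> i = j \<or> i = i0)
          \<or> (\<exists>j0\<in>{1..k}. \<forall>i\<in>{1..k}. \<forall>j\<in>{1..k}. r i j \<noteq> 0 \<longrightarrow> i = j \<or> j = j0)"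
  proof (rule ccontr)
    assume "\<not> ?thesis"
    then have A: "\<forall>i0\<in>{1..k}. \<exists>i\<in>{1..k}. \<exists>j\<in>{1..k}. r i j \<noteq> 0 \<and> i \<noteq> j \<and> i \<noteq> i0"
      and B: "\<forall>j0\<in>{1..k}. \<exists>i\<in>{1..k}. \<exists>j\<in>{1..k}. r i j \<noteq> 0 \<and> i \<noteq> j \<and> j \<noteq> j0"
      by blast+
    have "1 \<in> {1..k}" using assms(1) by simp
    then obtain a b where a: "a \<in> {1..k}" and b: "b \<in> {1..k}" and ab: "r a b \<noteq> 0" "a \<noteq> b"
      using A by blast
    obtain a' b' where a': "a' \<in> {1..k}" and b': "b' \<in> {1..k}" and ab': "r a' b' \<noteq> 0" "a' \<noteq> b'" "a' \<noteq> a"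
      using A a by blast
    obtain a'' b'' where a'': "a'' \<in> {1..k}" and b'': "b'' \<in> {1..k}" and ab'': "r a'' b'' \<noteq> 0" "a'' \<noteq> b''" "b'' \<noteq> b"
      using B b by blast
    have v1: "r a b = min (max (d a) 0) (max (- d b) 0)" using F a b ab by simp
    have v2: "r a' b' = min (max (d a') 0) (max (- d b') 0)" using F a' b' ab' by simp
    have v3: "r a'' b'' = min (max (d a'') 0) (max (- d b'') 0)" using F a'' b'' ab'' by simp
    have pa: "d a > 0" "d b < 0" using v1 ab(1) by (auto simp: min_def max_def split: if_splits)
    have pa': "d a' > 0" using v2 ab'(1) by (auto simp: min_def max_def split: if_splits)
    have pb'': "d b'' < 0" using v3 ab''(1) by (auto simp: min_def max_def split: if_splits)
    have ab2: "a \<noteq> b''" using pa pb'' by auto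
    have a'b: "a' \<noteq> b" using pa' pa by auto
    have e1: "r a b'' = min (d a) (- d b'')" using F[OF a b'' ab2] pa pb'' by simp
    have e2: "r a' b = min (d a') (- d b)" using F[OF a' b a'b] pa' pa by simp
    have e0: "r a b = min (d a) (- d b)" using v1 pa by simp
    have "sum (r a) {b, b''} \<le> p a - min (p a) (q a)"
      using rowle[OF m a, of "{b, b''}"] b b'' ab(2) ab2 by auto
    then have R: "r a b + r a b'' \<le> d a" using ab''(3) pa unfolding d_def by (auto simp: min_def split: if_splits)
    have "sum (\<lambda>i. r i b) {a, a'} \<le> q b - min (p b) (q b)"
      using colle[OF m b, of "{a, a'}"] a a' ab(2) a'b by auto
    then have C: "r a b + r a' b \<le> - d b" using ab'(3) pa unfolding d_def by (auto simp: min_def split: if_splits)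
    show False using R C e0 e1 e2 pa pa' pb'' by (auto simp: min_def split: if_splits)
  qed
qed

end
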